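(* Let $0<b<1$, $\alpha\in(0,1]$ and $a=b^{\alpha}$. Every $I_0$-valued (discrete) semi-stable$(a,b)$ law is discrete semi-selfdecomposable$(b)$.
   Context: $I_0=\{0,1,2,\dots\}$. An $I_0$-valued random variable with probability generating function (PGF) $P(s)$ is discrete semi-stable$(a,b)$ if $P(s)\neq 0$ and $\{P(s)\}^a=P(1-b+bs)$ for all $0\le s\le 1$, where $0<b<1$ and $b=a^{1/\alpha}$ for some $\alpha\in(0,1]$. An $I_0$-valued random variable with PGF $P(s)$ is discrete semi-selfdecomposable$(b)$ ($0<b<1$) if there exists an infinitely divisible PGF $P_0(s)$ such that $P(s)=P(1-b+bs)\,P_0(s)$ for all $0\le s\le 1$. *)

theory Defs
  imports "HOL-Probability.Probability_Mass_Function"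
begin

text \<open>The law of an I0-valued random variable is a probability mass function on nat.
  Its probability generating function:\<close>
definition pgf :: "nat pmf \<Rightarrow> real \<Rightarrow> real" where
  "pgf p s = (\<Sum>n. pmf p n * s ^ n)"

definition inf_div_pgf :: "(real \<Rightarrow> real) \<Rightarrow> bool" where
  "inf_div_pgf P \<longleftrightarrow> (\<exists>q. \<forall>s\<in>{0..1}. P s = pgf q s) \<and>
     (\<forall>n::nat. n \<ge> 1 \<longrightarrow> (\<exists>r. \<forall>s\<in>{0..1}. (pgf r s) ^ n = P s))"

definition discrete_semi_stable :: "real \<Rightarrow> real \<Rightarrow> nat pmf \<Rightarrow> bool" where
  "discrete_semi_stable a b p \<longleftrightarrow>
     (\<forall>s\<in>{0..1}. pgf p s \<noteq> 0 \<and> (pgf p s) powr a = pgf p (1 - b + b * s))"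

definition discrete_semi_selfdecomposable :: "real \<Rightarrow> nat pmf \<Rightarrow> bool" where
  "discrete_semi_selfdecomposable b p \<longleftrightarrow>
     (\<exists>P0. inf_div_pgf P0 \<and> (\<forall>s\<in>{0..1}. pgf p s = pgf p (1 - b + b * s) * P0 s))"

end

theory Submission imports Defs "HOL-Analysis.Analysis" "HOL-Library.Diagonal_Subsequence" begin
lemma pmf_nat_summable: "summable (\<lambda>n. pmf (p::nat pmf) n)"
proof -
  have "pmf p abs_summable_on UNIV" by (rule pmf_abs_summable)
  then show ?thesis
    by (simp add: abs_summable_on_nat_iff')
qed

lemma pmf_nat_sums: "(\<lambda>n. pmf (p::nat pmf) n) sums 1"
proof -
  have "(\<Sum>n. ennreal (pmf p n)) = (\<integral>\<^sup>+ n. ennreal (pmf p n) \<partial>count_space UNIV)"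
    by (rule nn_integral_count_space_nat[symmetric])
  also have "\<dots> = emeasure (measure_pmf p) UNIV" by (rule nn_integral_pmf) 
  also have "\<dots> = 1" by simp
  finally have "(\<Sum>n. ennreal (pmf p n)) = 1" .
  moreover have "(\<Sum>n. ennreal (pmf p n)) = ennreal (\<Sum>n. pmf p n)"
    by (rule suminf_ennreal2[OF _ pmf_nat_summable]) simp
  ultimately have "ennreal (\<Sum>n. pmf p n) = ennreal 1" by simp
  then have "(\<Sum>n. pmf p n) = 1"
    using suminf_nonneg[OF pmf_nat_summable[of p] pmf_nonneg] ennreal_inj by (metis zero_le_one)
  then show ?thesis using summable_sums[OF pmf_nat_summable[of p]] by simp
qed
lemma pgf_summable: assumes "s \<in> {0..1}" shows "summable (\<lambda>n. pmf p n * s ^ n)"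
proof (rule summable_comparison_test[OF _ pmf_nat_summable[of p]])
  show "\<exists>N. \<forall>n\<ge>N. norm (pmf p n * s ^ n) \<le> pmf p n"
    using assms by (auto simp: abs_mult intro!: mult_left_le power_le_one)
qed

lemma pgf_nn: assumes "s \<in> {0..1}" shows "ennreal (pgf p s) = (\<integral>\<^sup>+ n. ennreal (s ^ n) \<partial>measure_pmf p)"
proof -
  have "(\<integral>\<^sup>+ n. ennreal (s ^ n) \<partial>measure_pmf p) = (\<integral>\<^sup>+ n. ennreal (pmf p n * s ^ n) \<partial>count_space UNIV)"
    using assms by (simp add: nn_integral_measure_pmf ennreal_mult')
  also have "\<dots> = (\<Sum>n. ennreal (pmf p n * s ^ n))" by (simp add: nn_integral_count_space_nat)
  also have "\<dots> = ennreal (pgf p s)" unfolding pgf_def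
    using assms by (intro suminf_ennreal2 pgf_summable) auto
  finally show ?thesis by simp
qed

lemma pgf_nonneg: assumes "s \<in> {0..1}" shows "0 \<le> pgf p s"
  unfolding pgf_def using assms by (intro suminf_nonneg pgf_summable) auto

lemma pgf_one: "pgf p 1 = 1"
  unfolding pgf_def using pmf_nat_sums[of p] by (simp add: sums_iff)

lemma pgf_le_one: assumes "s \<in> {0..1}" shows "pgf p s \<le> 1"
proof -
  have "pgf p s \<le> (\<Sum>n. pmf p n)" unfolding pgf_def
    using assms by (intro suminf_le pgf_summable pmf_nat_summable) (auto intro!: mult_left_le power_le_one)
  then show ?thesis using pmf_nat_sums[of p] by (simp add: sums_iff)
qed

lemma pgf_eqI: assumes "s \<in> {0..1}" "0 \<le> x" "ennreal x = (\<integral>\<^sup>+ n. ennreal (s ^ n) \<partial>measure_pmf p)"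
  shows "pgf p s = x"
proof -
  have "ennreal (pgf p s) = ennreal x" using pgf_nn[OF assms(1), of p] assms by simp
  then show ?thesis using pgf_nonneg[OF assms(1), of p] assms(2) by simp
qed

lemma pgf_mult: assumes "s \<in> {0..1}"
  shows "pgf (bind_pmf p (\<lambda>x. map_pmf (\<lambda>y. x + y) q)) s = pgf p s * pgf q s"
proof (rule pgf_eqI[OF assms])
  show "0 \<le> pgf p s * pgf q s" using assms by (simp add: pgf_nonneg)
  have "(\<integral>\<^sup>+ n. ennreal (s ^ n) \<partial>measure_pmf (bind_pmf p (\<lambda>x. map_pmf (\<lambda>y. x + y) q)))
     = (\<integral>\<^sup>+ x. \<integral>\<^sup>+ y. ennreal (s ^ x) * ennreal (s ^ y) \<partial>q \<partial>p)"
    using assms by (simp add: power_add ennreal_mult')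
  also have "\<dots> = (\<integral>\<^sup>+ x. ennreal (s ^ x) * ennreal (pgf q s) \<partial>p)"
    using assms by (simp add: nn_integral_cmult pgf_nn)
  also have "\<dots> = ennreal (pgf p s) * ennreal (pgf q s)"
    using assms by (simp add: nn_integral_multc pgf_nn)
  finally show "ennreal (pgf p s * pgf q s) = (\<integral>\<^sup>+ n. ennreal (s ^ n) \<partial>measure_pmf (bind_pmf p (\<lambda>x. map_pmf (\<lambda>y. x + y) q)))"
    using assms by (simp add: ennreal_mult' pgf_nonneg)
qed

lemma pgf_return0: "pgf (return_pmf 0) s = 1"
proof -
  have "(\<lambda>n. pmf (return_pmf 0) n * s ^ n) = (\<lambda>n. if n = 0 then 1 else 0)"
    by (auto simp: pmf_return)
  then show ?thesis unfolding pgf_def using sums_single[of 0 "\<lambda>_. 1::real"] by (simp add: sums_iff)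
qed


lemma binom_pgf: assumes "0 < \<beta>" "\<beta> < 1" "s \<in> {0..1}"
  shows "(\<integral>\<^sup>+ k. ennreal (s ^ k) \<partial>measure_pmf (binomial_pmf n \<beta>)) = ennreal ((1 - \<beta> + \<beta> * s) ^ n)"
proof -
  have "(\<integral>\<^sup>+ k. ennreal (s ^ k) \<partial>measure_pmf (binomial_pmf n \<beta>))
      = (\<Sum>k\<in>{..n}. ennreal (s ^ k) * ennreal (real (n choose k) * \<beta> ^ k * (1 - \<beta>) ^ (n - k)))"
    using assms by (subst nn_integral_measure_pmf_finite) auto
  also have "\<dots> = (\<Sum>k\<in>{..n}. ennreal (real (n choose k) * (\<beta> * s) ^ k * (1 - \<beta>) ^ (n - k)))"
    using assms by (intro sum.cong refl) (simp add: ennreal_mult'[symmetric] power_mult_distrib mult_ac)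
  also have "\<dots> = ennreal (\<Sum>k\<in>{..n}. real (n choose k) * (\<beta> * s) ^ k * (1 - \<beta>) ^ (n - k))"
    using assms by (intro sum_ennreal) auto
  also have "(\<Sum>k\<in>{..n}. real (n choose k) * (\<beta> * s) ^ k * (1 - \<beta>) ^ (n - k)) = (\<beta> * s + (1 - \<beta>)) ^ n"
    by (simp add: binomial_ring)
  finally show ?thesis by (simp add: add.commute)
qed

lemma pgf_thin: assumes "0 < \<beta>" "\<beta> < 1" "s \<in> {0..1}"
  shows "pgf (bind_pmf q (\<lambda>n. binomial_pmf n \<beta>)) s = pgf q (1 - \<beta> + \<beta> * s)"
proof (rule pgf_eqI[OF assms(3)])
  have t: "1 - \<beta> + \<beta> * s \<in> {0..1}" using assms by (auto intro: convex_bound_le)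
  then show "0 \<le> pgf q (1 - \<beta> + \<beta> * s)" by (rule pgf_nonneg)
  show "ennreal (pgf q (1 - \<beta> + \<beta> * s)) = (\<integral>\<^sup>+ n. ennreal (s ^ n) \<partial>measure_pmf (bind_pmf q (\<lambda>n. binomial_pmf n \<beta>)))"
    using assms by (simp add: binom_pgf pgf_nn[OF t])
qed


lemma pmf_partial_le1: "(\<Sum>n<N. pmf (p::nat pmf) n) \<le> 1"
  using sum_le_suminf[OF pmf_nat_summable[of p], of "{..<N}"] pmf_nat_sums[of p]
  by (simp add: sums_iff)

lemma pgf_limit:
  fixes p :: "nat \<Rightarrow> nat pmf" and f :: "real \<Rightarrow> real"
  assumes lim: "\<And>s. s \<in> {0..1} \<Longrightarrow> (\<lambda>k. pgf (p k) s) \<longlonglongrightarrow> f s"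
    and f1: "f 1 = 1" and near: "\<And>e. e > 0 \<Longrightarrow> \<exists>s\<in>{0..<1}. f s > 1 - e"
  shows "\<exists>q. \<forall>s\<in>{0..1}. pgf q s = f s"
proof -
  let ?P = "\<lambda>n. \<lambda>r. convergent (\<lambda>k. pmf (p (r k)) n)"
  interpret nat: subseqs ?P
  proof (unfold convergent_def, unfold subseqs_def, auto)
    fix n :: nat and s :: "nat \<Rightarrow> nat" assume s: "strict_mono s"
    have "\<And>k. pmf (p (s k)) n \<in> {0..1}" by (simp add: pmf_le_1)
    then have "\<exists>l s'. strict_mono s' \<and> ((\<lambda>k. pmf (p (s k)) n) \<circ> s') \<longlonglongrightarrow> l"
      using compact_Icc compact_imp_seq_compact seq_compactE by metis
    thus "\<exists>s'. strict_mono (s'::nat\<Rightarrow>nat) \<and> (\<exists>l. (\<lambda>k. pmf (p (s (s' k))) n) \<longlonglongrightarrow> l)"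
      by (auto simp: comp_def)
  qed
  define d where "d = nat.diagseq"
  have subseq: "strict_mono d"
    unfolding d_def using nat.subseq_diagseq by auto
  have cnv: "?P n d" for n
  proof -
    have Pn_seqseq: "?P n (nat.seqseq (Suc n))"
      by (rule nat.seqseq_holds)
    have 1: "(\<lambda>k. pmf (p ((nat.seqseq (Suc n) \<circ> (\<lambda>k. nat.fold_reduce (Suc n) k
      (Suc n + k))) k)) n) = (\<lambda>k. pmf (p (nat.seqseq (Suc n) k)) n) \<circ>
      (\<lambda>k. nat.fold_reduce (Suc n) k (Suc n + k))"
      by auto
    have 2: "?P n (d \<circ> ((+) (Suc n)))"
      unfolding d_def nat.diagseq_seqseq 1
      by (intro convergent_subseq_convergent Pn_seqseq nat.subseq_diagonal_rest)
    then obtain L where 3: "(\<lambda>na. pmf (p (d (na + Suc n))) n) \<longlonglongrightarrow> L"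
      by (auto simp: add.commute dest: convergentD)
    then have "(\<lambda>k. pmf (p (d k)) n) \<longlonglongrightarrow> L"
      by (rule LIMSEQ_offset)
    then show ?thesis
      by (auto simp: convergent_def)
  qed
  define c where "c n = lim (\<lambda>k. pmf (p (d k)) n)" for n
  have c_lim: "(\<lambda>k. pmf (p (d k)) n) \<longlonglongrightarrow> c n" for n
    using cnv[of n] unfolding c_def by (simp add: convergent_LIMSEQ_iff)
  have c_nn: "0 \<le> c n" for n
    by (rule LIMSEQ_le_const[OF c_lim]) auto
  have c_part: "(\<Sum>n<N. c n) \<le> 1" for N
  proof -
    have "(\<lambda>k. \<Sum>n<N. pmf (p (d k)) n) \<longlonglongrightarrow> (\<Sum>n<N. c n)"
      by (intro tendsto_sum c_lim)
    then show ?thesis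
      by (rule LIMSEQ_le_const2) (auto simp: pmf_partial_le1)
  qed
  have c_sum: "summable c"
  proof (rule bounded_imp_summable[of _ 1])
    show "(\<Sum>k\<le>n. c k) \<le> 1" for n using c_part[of "Suc n"] by (simp add: lessThan_Suc_atMost[symmetric] del: sum.lessThan_Suc)
  qed (rule c_nn)
  have c_le1: "suminf c \<le> 1"
    by (rule suminf_le_const[OF c_sum]) (use c_part in auto)
  have fs: "f s = (\<Sum>n. c n * s ^ n)" if s: "s \<in> {0..<1}" for s
  proof -
    have T: "((\<lambda>k. \<Sum>n. pmf (p (d k)) n * s ^ n) \<longlonglongrightarrow> (\<Sum>n. c n * s ^ n))"
    proof -
      have "eventually (\<lambda>k. summable (\<lambda>n. norm (pmf (p (d k)) n * s ^ n))) sequentially \<and>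
           summable (\<lambda>n. norm (c n * s ^ n)) \<and>
           ((\<lambda>k. \<Sum>n. pmf (p (d k)) n * s ^ n) \<longlonglongrightarrow> (\<Sum>n. c n * s ^ n))"
      proof (rule tannerys_theorem[where M = "\<lambda>n. s ^ n"])
        show "(\<lambda>k. pmf (p (d k)) n * s ^ n) \<longlonglongrightarrow> c n * s ^ n" for n
          by (intro tendsto_mult c_lim tendsto_const)
        show "\<forall>\<^sub>F (n, k) in at_top \<times>\<^sub>F sequentially. norm (pmf (p (d k)) n * s ^ n) \<le> s ^ n"
          using s by (intro always_eventually) (auto simp: abs_mult pmf_le_1 intro!: mult_left_le_one_le)
        show "summable (\<lambda>n. s ^ n)" using s by (intro summable_geometric) auto
      qed auto
      then show ?thesis by blast
    qed
    have "(\<lambda>k. pgf (p (d k)) s) \<longlonglongrightarrow> f s"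
      using LIMSEQ_subseq_LIMSEQ[OF lim subseq] s by (auto simp: o_def)
    then show ?thesis using T unfolding pgf_def using LIMSEQ_unique by blast
  qed
  have c_ge1: "suminf c \<ge> 1"
  proof (rule field_le_epsilon)
    fix e :: real assume e: "0 < e"
    then obtain s where s: "s \<in> {0..<1}" "f s > 1 - e" using near by blast
    have sm: "summable (\<lambda>n. c n * s ^ n)"
      by (rule summable_comparison_test[OF _ c_sum])
         (use s(1) c_nn in \<open>auto simp: abs_mult intro!: mult_left_le power_le_one\<close>)
    have "f s \<le> suminf c" unfolding fs[OF s(1)]
      using s(1) c_nn
      by (intro suminf_le sm c_sum) (auto intro!: mult_left_le power_le_one)
    then show "1 \<le> suminf c + e" using s by simp
  qed
  have c1: "suminf c = 1" using c_le1 c_ge1 by simp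
  have nn1: "(\<integral>\<^sup>+x. ennreal (c x) \<partial>count_space UNIV) = 1"
    using c1 c_sum c_nn by (simp add: nn_integral_count_space_nat suminf_ennreal2)
  define q where "q = embed_pmf c"
  have pq: "pmf q n = c n" for n unfolding q_def using c_nn nn1 by (intro pmf_embed_pmf) auto
  show ?thesis
  proof (intro exI ballI)
    fix s :: real assume s: "s \<in> {0..1}"
    show "pgf q s = f s"
    proof (cases "s = 1")
      case True then show ?thesis using c1 f1 by (simp add: pgf_def pq)
    next
      case False then show ?thesis using s fs[of s] by (simp add: pgf_def pq)
    qed
  qed
qed


lemma pgf_cont: "continuous_on {0..1} (pgf p)"
proof -
  have "uniform_limit {0..1} (\<lambda>n x. \<Sum>i<n. pmf p i * x ^ i) (\<lambda>x. \<Sum>i. pmf p i * x ^ i) sequentially"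
    by (rule Weierstrass_m_test[OF _ pmf_nat_summable[of p]])
       (auto simp: abs_mult intro!: mult_left_le power_le_one)
  moreover have "\<forall>\<^sub>F n in sequentially. continuous_on {0..1} (\<lambda>x. \<Sum>i<n. pmf p i * x ^ i)"
    by (intro always_eventually allI continuous_intros)
  ultimately have "continuous_on {0..1} (\<lambda>x. \<Sum>i. pmf p i * x ^ i)"
    by (intro uniform_limit_theorem) auto
  then show ?thesis unfolding pgf_def[abs_def] .
qed

theorem theorem2p3:
  fixes a b \<alpha> :: real and p :: "nat pmf"
  assumes "0 < b" "b < 1" "0 < \<alpha>" "\<alpha> \<le> 1" "a = b powr \<alpha>"
    and "discrete_semi_stable a b p"
  shows "discrete_semi_selfdecomposable b p"
proof -
  define P where "P = pgf p"
  have a1: "a < 1" using assms powr_less_mono2[of \<alpha> b 1] by simp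
  have a0: "0 < a" using assms by simp
  have Tin: "1 - b + b * s \<in> {0..1}" if "s \<in> {0..1}" for s
    using that assms by (auto intro: convex_bound_le)
  have Ppos: "P s > 0" if "s \<in> {0..1}" for s
    using assms(6) that pgf_nonneg[OF that, of p] unfolding discrete_semi_stable_def P_def
    by (metis less_eq_real_def)
  have semi: "P s powr a = P (1 - b + b * s)" if "s \<in> {0..1}" for s
    using assms(6) that unfolding discrete_semi_stable_def P_def by blast
  define S where "S c \<longleftrightarrow> (\<exists>q. \<forall>s\<in>{0..1}. pgf q s = P s powr c)" for c
  have S0: "S 0" unfolding S_def
  proof (rule exI[of _ "return_pmf 0"], intro ballI)
    fix s :: real assume "s \<in> {0..1}"
    then have "P s \<noteq> 0" using Ppos by (metis less_irrefl)
    then show "pgf (return_pmf 0) s = P s powr 0" by (simp add: pgf_return0)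
  qed
  have Sadd: "S (x + y)" if "S x" "S y" for x y
  proof -
    obtain q1 where q1: "\<forall>s\<in>{0..1}. pgf q1 s = P s powr x" using \<open>S x\<close> S_def by blast
    obtain q2 where q2: "\<forall>s\<in>{0..1}. pgf q2 s = P s powr y" using \<open>S y\<close> S_def by blast
    show ?thesis unfolding S_def
      by (rule exI[of _ "bind_pmf q1 (\<lambda>x. map_pmf (\<lambda>y. x + y) q2)"])
         (use q1 q2 in \<open>auto simp: pgf_mult powr_add\<close>)
  qed
  have Smult: "S (real m * x)" if "S x" for m x
  proof (induction m)
    case 0 then show ?case using S0 by simp
  next
    case (Suc m)
    have "S (real m * x + x)" by (rule Sadd[OF Suc that])
    then show ?case by (simp add: algebra_simps)
  qed
  have Sa: "S (a * x)" if "S x" for x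
  proof -
    obtain q where q: "\<forall>s\<in>{0..1}. pgf q s = P s powr x" using \<open>S x\<close> S_def by blast
    show ?thesis unfolding S_def
    proof (rule exI[of _ "bind_pmf q (\<lambda>n. binomial_pmf n b)"], intro ballI)
      fix s :: real assume s: "s \<in> {0..1}"
      have "pgf (bind_pmf q (\<lambda>n. binomial_pmf n b)) s = pgf q (1 - b + b * s)"
        using assms s by (intro pgf_thin) auto
      also have "\<dots> = P (1 - b + b * s) powr x" using q Tin[OF s] by blast
      also have "\<dots> = P s powr (a * x)" using semi[OF s] by (metis powr_powr)
      finally show "pgf (bind_pmf q (\<lambda>n. binomial_pmf n b)) s = P s powr (a * x)" .
    qed
  qed
  have S1: "S 1" unfolding S_def
    by (rule exI[of _ p]) (use pgf_nonneg in \<open>auto simp: P_def\<close>)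
  have Spow: "S (a ^ k)" for k
  proof (induction k)
    case 0 then show ?case using S1 by simp
  next
    case (Suc k) then show ?case using Sa by simp
  qed
  have Sall: "S c" if c: "c \<ge> 0" for c
  proof -
    define x where "x k = real (nat \<lfloor>c / a ^ k\<rfloor>) * a ^ k" for k
    have Sx: "S (x k)" for k unfolding x_def by (rule Smult[OF Spow])
    have xle: "x k \<le> c" for k
    proof -
      have "real (nat \<lfloor>c / a ^ k\<rfloor>) \<le> c / a ^ k" using c a0 by simp
      then show ?thesis unfolding x_def using a0 by (simp add: pos_le_divide_eq)
    qed
    have xge: "c - a ^ k \<le> x k" for k
    proof -
      have "c / a ^ k - 1 \<le> real (nat \<lfloor>c / a ^ k\<rfloor>)" using c a0 by linarith
      then have "(c / a ^ k - 1) * a ^ k \<le> x k" unfolding x_def using a0 by (intro mult_right_mono) auto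
      then show ?thesis using a0 by (simp add: algebra_simps)
    qed
    have ak: "(\<lambda>k. a ^ k) \<longlonglongrightarrow> 0" using a0 a1 by (intro LIMSEQ_power_zero) auto
    have xlim: "x \<longlonglongrightarrow> c"
    proof (rule tendsto_sandwich[of "\<lambda>k. c - a ^ k" _ _ "\<lambda>k. c"])
      show "(\<lambda>k. c - a ^ k) \<longlonglongrightarrow> c" using tendsto_diff[OF tendsto_const ak, of c] by simp
    qed (use xle xge in auto)
    have "\<forall>k. \<exists>q. \<forall>s\<in>{0..1}. pgf q s = P s powr x k" using Sx unfolding S_def by blast
    then obtain Q where Q: "\<And>k. \<forall>s\<in>{0..1}. pgf (Q k) s = P s powr x k" by metis
    have "\<exists>q. \<forall>s\<in>{0..1}. pgf q s = P s powr c"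
    proof (rule pgf_limit[where p = Q])
      fix s :: real assume s: "s \<in> {0..1}"
      have "(\<lambda>k. P s powr x k) \<longlonglongrightarrow> P s powr c"
        using Ppos[OF s] by (intro tendsto_powr tendsto_const xlim) auto
      then show "(\<lambda>k. pgf (Q k) s) \<longlonglongrightarrow> P s powr c" using Q s by simp
    next
      show "P 1 powr c = 1" by (simp add: P_def pgf_one)
    next
      fix e :: real assume e: "e > 0"
      have cP: "continuous_on {0..1} P" unfolding P_def by (rule pgf_cont)
      have nz: "\<forall>s\<in>{0..1}. P s \<noteq> 0" using Ppos by (metis less_irrefl)
      have "continuous_on {0..1} (\<lambda>s. P s powr c)"
        by (rule continuous_on_powr[OF cP continuous_on_const nz])
      then obtain d where d: "d > 0" "\<forall>s\<in>{0..1}. dist s 1 < d \<longrightarrow> dist (P s powr c) (P 1 powr c) < e"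
        unfolding continuous_on_iff using e by (metis atLeastAtMost_iff order_refl zero_le_one)
      define s where "s = max 0 (1 - d / 2)"
      have s01: "s \<in> {0..<1}" using d unfolding s_def by auto
      have "dist s 1 < d" using d unfolding s_def dist_real_def by auto
      then have "dist (P s powr c) 1 < e" using d s01 by (simp add: P_def pgf_one)
      then have "P s powr c > 1 - e" by (simp add: dist_real_def abs_less_iff)
      then show "\<exists>s\<in>{0..<1}. P s powr c > 1 - e" using s01 by blast
    qed
    then show ?thesis unfolding S_def .
  qed
  define P0 where "P0 s = P s powr (1 - a)" for s
  have idiv: "inf_div_pgf P0"
    unfolding inf_div_pgf_def
  proof (intro conjI allI impI)
    show "\<exists>q. \<forall>s\<in>{0..1}. P0 s = pgf q s"
      using Sall[of "1 - a"] a1 unfolding S_def P0_def by (metis diff_ge_0_iff_ge less_eq_real_def)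
  next
    fix n :: nat assume n: "n \<ge> 1"
    obtain r where r: "\<forall>s\<in>{0..1}. pgf r s = P s powr ((1 - a) / n)"
      using Sall[of "(1 - a) / n"] a1 unfolding S_def by auto
    show "\<exists>r. \<forall>s\<in>{0..1}. pgf r s ^ n = P0 s"
    proof (intro exI ballI)
      fix s :: real assume s: "s \<in> {0..1}"
      have "pgf r s ^ n = P s powr (real n * ((1 - a) / n))"
        using r s Ppos[OF s] by (simp add: powr_power)
      also have "\<dots> = P0 s" using n by (simp add: P0_def)
      finally show "pgf r s ^ n = P0 s" .
    qed
  qed
  show ?thesis unfolding discrete_semi_selfdecomposable_def
  proof (intro exI conjI ballI)
    show "inf_div_pgf P0" by (rule idiv)
    fix s :: real assume s: "s \<in> {0..1}"
    have "pgf p (1 - b + b * s) * P0 s = P s powr a * P s powr (1 - a)"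
      using semi[OF s] by (simp add: P0_def P_def)
    also have "\<dots> = P s" using Ppos[OF s] by (simp add: powr_add[symmetric])
    finally show "pgf p s = pgf p (1 - b + b * s) * P0 s" by (simp add: P_def)
  qed
qed

end
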